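(* Let $X$ and $Y$ be independent real random variables with $X \in \mathcal{D}^-$ and $Y \in \mathcal{D}^-$, and let $\phi:\mathbb{R}^2\to\mathbb{R}$ be increasing (componentwise non-decreasing) and convex. Then $\phi(X,Y)\in\mathcal{D}^-$.
   Context: For real random variables, $X \le_{st} Y$ means $P(X\le t)\ge P(Y\le t)$ for all $t\in\mathbb{R}$. A real random variable $X$ (equivalently its distribution function $F_X$) belongs to $\mathcal{D}^-$ if for every $n\in\mathbb{N}$, all $\theta_1,\dots,\theta_n\ge 0$ with $\sum_{i=1}^n\theta_i=1$, and i.i.d. random variables $X_1,\dots,X_n$ with distribution $F_X$, we have $X_1\le_{st}\sum_{i=1}^n\theta_iX_i$. *)

theory Defs
  imports "HOL-Probability.Probability"
begin

text \<open>Class D^-: a distribution F on the reals belongs to D^- if for every n,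
  all nonnegative weights theta_0..theta_(n-1) summing to 1 and i.i.d. X_0..X_(n-1)
  with law F (realised canonically on the product space PiM {..<n} (\<lambda>_. F)),
  X_0 is stochastically dominated by the weighted sum, i.e.
  P(X_0 \<le> t) \<ge> P(sum theta_i X_i \<le> t) for all real t.
  Since X_0 has law F, P(X_0 \<le> t) = measure F {..t}.\<close>

definition Dminus :: "real measure \<Rightarrow> bool" where
  "Dminus F \<longleftrightarrow>
     (\<forall>(n::nat) (\<theta>::nat \<Rightarrow> real).
        (\<forall>i<n. 0 \<le> \<theta> i) \<and> (\<Sum>i<n. \<theta> i) = 1 \<longrightarrow>
        (\<forall>t::real.
           measure (PiM {..<n} (\<lambda>_. F))
             {x \<in> space (PiM {..<n} (\<lambda>_. F)). (\<Sum>i<n. \<theta> i * x i) \<le> t}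
           \<le> measure F {..t}))"

end

theory Submission
  imports Defs
begin

lemma down_lemma:
  fixes F :: "real measure" and D :: "real set" and n :: nat and \<theta> :: "nat \<Rightarrow> real"
  assumes DF: "Dminus F" and pF: "prob_space F" and sF: "sets F = sets borel"
    and th: "\<forall>i<n. 0 \<le> \<theta> i" "(\<Sum>i<n. \<theta> i) = 1"
    and cD: "closed D" and dD: "\<And>x y. x \<in> D \<Longrightarrow> y \<le> x \<Longrightarrow> y \<in> D"
  shows "emeasure (PiM {..<n} (\<lambda>_. F)) {u \<in> space (PiM {..<n} (\<lambda>_. F)). (\<Sum>i<n. \<theta> i * u i) \<in> D} \<le> emeasure F D"
proof -
  let ?Q = "PiM {..<n} (\<lambda>_. F)"
  interpret Q: prob_space ?Q by (intro prob_space_PiM) (use pF in auto)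
  interpret F: prob_space F by fact
  have spF: "space F = UNIV" using sets_eq_imp_space_eq[OF sF] by simp
  show ?thesis
  proof (cases "D = {}")
    case True then show ?thesis by simp
  next
    case ne: False
    show ?thesis
    proof (cases "bdd_above D")
      case False
      have "y \<in> D" for y
      proof -
        from False obtain x where "x \<in> D" "\<not> x \<le> y" unfolding bdd_above_def by auto
        then show "y \<in> D" using dD by auto
      qed
      hence "D = UNIV" by auto
      then show ?thesis using Q.emeasure_le_1 F.emeasure_space_1 spF by simp
    next
      case True
      define c where "c = Sup D"
      have cin: "c \<in> D" unfolding c_def by (rule closed_contains_Sup[OF ne True cD])
      have Dc: "D = {..c}"
      proof (intro set_eqI iffI)
        fix x assume "x \<in> D" then show "x \<in> {..c}" unfolding c_def using cSup_upper[OF _ True] by simp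
      next
        fix x assume "x \<in> {..c}" then show "x \<in> D" using dD[OF cin] by simp
      qed
      have "measure ?Q {u \<in> space ?Q. (\<Sum>i<n. \<theta> i * u i) \<le> c} \<le> measure F {..c}"
        using DF[unfolded Dminus_def, rule_format, of n \<theta> c] th by blast
      then show ?thesis unfolding Dc using Q.emeasure_eq_measure F.emeasure_eq_measure
        by (simp add: ennreal_leI)
    qed
  qed
qed


lemma prod_ind:
  assumes "finite I"
  shows "(\<Prod>i\<in>I. indicator (A i) (g i) :: ennreal) = (if \<forall>i\<in>I. g i \<in> A i then 1 else 0)"
proof (cases "\<forall>i\<in>I. g i \<in> A i")
  case True then show ?thesis by (simp add: indicator_def)
next
  case False
  then obtain j where "j \<in> I" "g j \<notin> A j" by auto
  then show ?thesis using assms by (auto intro!: prod_zero simp: indicator_def)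
qed

lemma K2:
  fixes FX FY :: "real measure" and \<phi> :: "real \<times> real \<Rightarrow> real" and I :: "nat set"
  assumes pX: "prob_space FX" and pY: "prob_space FY"
    and sX[measurable_cong]: "sets FX = sets borel" and sY[measurable_cong]: "sets FY = sets borel"
    and phim[measurable]: "\<phi> \<in> borel_measurable (borel \<Otimes>\<^sub>M borel)" and fI: "finite I"
  shows "distr (PiM I (\<lambda>_. FX) \<Otimes>\<^sub>M PiM I (\<lambda>_. FY)) (PiM I (\<lambda>_. distr (FX \<Otimes>\<^sub>M FY) borel \<phi>))
            (\<lambda>(u,v). \<lambda>i\<in>I. \<phi> (u i, v i)) = PiM I (\<lambda>_. distr (FX \<Otimes>\<^sub>M FY) borel \<phi>)"
    (is "distr ?P ?PZ ?\<Psi> = _")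
proof -
  define FZ where "FZ = distr (FX \<Otimes>\<^sub>M FY) borel \<phi>"
  interpret X: prob_space FX by fact
  interpret Y: prob_space FY by fact
  interpret XY: pair_sigma_finite FX FY ..
  interpret PX: product_prob_space "\<lambda>_. FX" I by standard
  interpret PY: product_prob_space "\<lambda>_. FY" I by standard
  interpret PXf: finite_product_prob_space "\<lambda>_. FX" I by standard fact
  interpret PYf: finite_product_prob_space "\<lambda>_. FY" I by standard fact
  interpret PXY: pair_sigma_finite "PiM I (\<lambda>_. FX)" "PiM I (\<lambda>_. FY)" ..
  have pZ: "prob_space FZ" unfolding FZ_def
    by (intro prob_space.prob_space_distr) (auto intro: prob_space_pair pX pY)
  interpret Z: product_prob_space "\<lambda>_. FZ" I using pZ by (simp add: product_prob_space_def product_prob_space_axioms_def product_sigma_finite_def prob_space_imp_sigma_finite)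
  have phim2[measurable]: "\<phi> \<in> borel_measurable (FX \<Otimes>\<^sub>M FY)"
    using phim by (simp add: measurable_cong_sets[OF sets_pair_measure_cong[OF sX sY] refl])
  have sZ[measurable_cong]: "sets FZ = sets borel" unfolding FZ_def by simp
  have Psim[measurable]: "?\<Psi> \<in> measurable ?P (PiM I (\<lambda>_. FZ))"
    unfolding FZ_def[symmetric] by measurable
  show ?thesis unfolding FZ_def[symmetric]
  proof (rule Z.PiM_eqI[OF fI])
    show "sets (distr ?P (PiM I (\<lambda>_. FZ)) ?\<Psi>) = sets (PiM I (\<lambda>_. FZ))" by simp
  next
    fix A assume A: "\<And>i. i \<in> I \<Longrightarrow> A i \<in> sets FZ"
    have A'[measurable]: "i \<in> I \<Longrightarrow> A i \<in> sets borel" for i using A sZ by auto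
    let ?f = "\<lambda>i x y. indicator (A i) (\<phi> (x, y)) :: ennreal"
    have "emeasure (distr ?P (PiM I (\<lambda>_. FZ)) ?\<Psi>) (Pi\<^sub>E I A) = emeasure ?P (?\<Psi> -` Pi\<^sub>E I A \<inter> space ?P)"
      by (rule emeasure_distr[OF Psim]) (use A in \<open>auto intro: sets_PiM_I_finite fI\<close>)
    also have "\<dots> = (\<integral>\<^sup>+w. indicator (?\<Psi> -` Pi\<^sub>E I A \<inter> space ?P) w \<partial>?P)"
      by (rule nn_integral_indicator[symmetric]) (rule measurable_sets[OF Psim], use A in \<open>auto intro: sets_PiM_I_finite fI\<close>)
    also have "\<dots> = (\<integral>\<^sup>+u. \<integral>\<^sup>+v. indicator (?\<Psi> -` Pi\<^sub>E I A \<inter> space ?P) (u,v) \<partial>PiM I (\<lambda>_. FY) \<partial>PiM I (\<lambda>_. FX))"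
      by (rule sigma_finite_measure.nn_integral_fst[symmetric, OF prob_space_imp_sigma_finite[OF prob_space_PiM]])
        (use pY in \<open>auto intro!: borel_measurable_indicator measurable_sets[OF Psim] sets_PiM_I_finite fI A\<close>)
    also have "\<dots> = (\<integral>\<^sup>+u. \<integral>\<^sup>+v. (\<Prod>i\<in>I. ?f i (u i) (v i)) \<partial>PiM I (\<lambda>_. FY) \<partial>PiM I (\<lambda>_. FX))"
      proof (rule nn_integral_cong)
      fix u assume u: "u \<in> space (PiM I (\<lambda>_. FX))"
      show "(\<integral>\<^sup>+v. indicator (?\<Psi> -` Pi\<^sub>E I A \<inter> space ?P) (u,v) \<partial>PiM I (\<lambda>_. FY)) = (\<integral>\<^sup>+v. (\<Prod>i\<in>I. ?f i (u i) (v i)) \<partial>PiM I (\<lambda>_. FY))"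
      proof (rule nn_integral_cong)
        fix v assume v: "v \<in> space (PiM I (\<lambda>_. FY))"
        show "indicator (?\<Psi> -` Pi\<^sub>E I A \<inter> space ?P) (u,v) = (\<Prod>i\<in>I. ?f i (u i) (v i))"
          using u v by (subst prod_ind[OF fI]) (auto simp: space_pair_measure indicator_def PiE_iff)
      qed
    qed
    also have "\<dots> = (\<integral>\<^sup>+u. (\<Prod>i\<in>I. \<integral>\<^sup>+y. ?f i (u i) y \<partial>FY) \<partial>PiM I (\<lambda>_. FX))"
      proof (rule nn_integral_cong)
      fix u assume u: "u \<in> space (PiM I (\<lambda>_. FX))"
      show "(\<integral>\<^sup>+v. (\<Prod>i\<in>I. ?f i (u i) (v i)) \<partial>PiM I (\<lambda>_. FY)) = (\<Prod>i\<in>I. \<integral>\<^sup>+y. ?f i (u i) y \<partial>FY)"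
        by (rule PY.product_nn_integral_prod[OF fI]) measurable
    qed
    also have "\<dots> = (\<Prod>i\<in>I. \<integral>\<^sup>+x. \<integral>\<^sup>+y. ?f i x y \<partial>FY \<partial>FX)"
      by (rule PX.product_nn_integral_prod[OF fI]) measurable
    also have "\<dots> = (\<Prod>i\<in>I. emeasure FZ (A i))"
      proof (rule prod.cong[OF refl])
      fix i assume i: "i \<in> I"
      have Ai[measurable]: "A i \<in> sets borel" using A' i .
      have meas: "(\<lambda>p. indicator (A i) (\<phi> p) :: ennreal) \<in> borel_measurable (FX \<Otimes>\<^sub>M FY)" by measurable
      have "(\<integral>\<^sup>+x. \<integral>\<^sup>+y. ?f i x y \<partial>FY \<partial>FX) = (\<integral>\<^sup>+p. indicator (A i) (\<phi> p) \<partial>(FX \<Otimes>\<^sub>M FY))"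
        using Y.nn_integral_fst[OF meas] by simp
      also have "\<dots> = (\<integral>\<^sup>+z. indicator (A i) z \<partial>FZ)"
        unfolding FZ_def using i by (subst nn_integral_distr) auto
      also have "\<dots> = emeasure FZ (A i)" using A i by simp
      finally show "(\<integral>\<^sup>+x. \<integral>\<^sup>+y. ?f i x y \<partial>FY \<partial>FX) = emeasure FZ (A i)" .
    qed
    finally show "emeasure (distr ?P (PiM I (\<lambda>_. FZ)) ?\<Psi>) (Pi\<^sub>E I A) = (\<Prod>i\<in>I. emeasure FZ (A i))" .
  qed
qed


lemma main_abs:
  fixes FX FY :: "real measure" and \<phi> :: "real \<times> real \<Rightarrow> real"
  assumes pX: "prob_space FX" and pY: "prob_space FY"
    and sX[measurable_cong]: "sets FX = sets borel" and sY[measurable_cong]: "sets FY = sets borel"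
    and DX: "Dminus FX" and DY: "Dminus FY"
    and mono: "\<And>a b c d. a \<le> c \<Longrightarrow> b \<le> d \<Longrightarrow> \<phi> (a, b) \<le> \<phi> (c, d)"
    and conv: "convex_on UNIV \<phi>"
  shows "Dminus (distr (FX \<Otimes>\<^sub>M FY) borel \<phi>)"
  unfolding Dminus_def
proof (intro allI impI)
  fix n :: nat and \<theta> :: "nat \<Rightarrow> real" and t :: real
  assume th: "(\<forall>i<n. 0 \<le> \<theta> i) \<and> (\<Sum>i<n. \<theta> i) = 1"
  have th1: "\<forall>i<n. 0 \<le> \<theta> i" and th2: "(\<Sum>i<n. \<theta> i) = 1" using th by auto
  define FZ where "FZ = distr (FX \<Otimes>\<^sub>M FY) borel \<phi>"
  have cont: "continuous_on UNIV \<phi>" by (rule convex_on_continuous[OF open_UNIV conv])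
  have phim0: "\<phi> \<in> borel_measurable borel" by (rule borel_measurable_continuous_onI[OF cont])
  have phim[measurable]: "\<phi> \<in> borel_measurable (borel \<Otimes>\<^sub>M borel)" using phim0 by (simp add: borel_prod)
  interpret X: prob_space FX by fact
  interpret Y: prob_space FY by fact
  interpret XY: pair_sigma_finite FX FY ..
  interpret PXf: finite_product_prob_space "\<lambda>_. FX" "{..<n}" by standard simp
  interpret PYf: finite_product_prob_space "\<lambda>_. FY" "{..<n}" by standard simp
  interpret PXY: pair_sigma_finite "PiM {..<n} (\<lambda>_. FX)" "PiM {..<n} (\<lambda>_. FY)" ..
  interpret XPY: pair_sigma_finite FX "PiM {..<n} (\<lambda>_. FY)" ..
  have sfPY: "sigma_finite_measure (PiM {..<n} (\<lambda>_. FY))"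
    by (rule prob_space_imp_sigma_finite, rule prob_space_PiM) (use pY in auto)
  have pZ: "prob_space FZ" unfolding FZ_def
    by (intro prob_space.prob_space_distr) (auto intro: prob_space_pair pX pY)
  interpret Z: prob_space FZ by fact
  interpret PZ: prob_space "PiM {..<n} (\<lambda>_. FZ)" by (rule prob_space_PiM) (use pZ in auto)
  have phim2[measurable]: "\<phi> \<in> borel_measurable (FX \<Otimes>\<^sub>M FY)"
    using phim by (simp add: measurable_cong_sets[OF sets_pair_measure_cong[OF sX sY] refl])
  have spX: "space FX = UNIV" using sets_eq_imp_space_eq[OF sX] by simp
  have spY: "space FY = UNIV" using sets_eq_imp_space_eq[OF sY] by simp
  let ?P = "PiM {..<n} (\<lambda>_. FX) \<Otimes>\<^sub>M PiM {..<n} (\<lambda>_. FY)"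
  let ?\<Psi> = "\<lambda>(u,v). \<lambda>i\<in>{..<n}. \<phi> (u i, v i)"
  have K: "distr ?P (PiM {..<n} (\<lambda>_. FZ)) ?\<Psi> = PiM {..<n} (\<lambda>_. FZ)"
    unfolding FZ_def by (rule K2[OF pX pY sX sY phim]) simp
  have sZ[measurable_cong]: "sets FZ = sets borel" unfolding FZ_def by simp
  have Psim[measurable]: "?\<Psi> \<in> measurable ?P (PiM {..<n} (\<lambda>_. FZ))" by measurable
  let ?S = "{x \<in> space (PiM {..<n} (\<lambda>_. FZ)). (\<Sum>i<n. \<theta> i * x i) \<le> t}"
  have spZ: "space FZ = UNIV" by (simp add: FZ_def)
  have Sm: "?S \<in> sets (PiM {..<n} (\<lambda>_. FZ))" by measurable
  have sumr: "(\<Sum>i<n. \<theta> i * restrict f {..<n} i) = (\<Sum>i<n. \<theta> i * f i)" for f :: "nat \<Rightarrow> real"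
    by (rule sum.cong) auto
  have "emeasure (PiM {..<n} (\<lambda>_. FZ)) ?S = emeasure (distr ?P (PiM {..<n} (\<lambda>_. FZ)) ?\<Psi>) ?S"
    using K by simp
  also have "\<dots> = emeasure ?P (?\<Psi> -` ?S \<inter> space ?P)"
    by (rule emeasure_distr[OF Psim]) (rule Sm)
  also have "?\<Psi> -` ?S \<inter> space ?P = {w \<in> space ?P. (\<Sum>i<n. \<theta> i * \<phi> (fst w i, snd w i)) \<le> t}"
    using sumr by (auto simp: split_beta space_PiM spZ)
  also have "emeasure ?P \<dots> \<le> emeasure ?P {w \<in> space ?P. \<phi> (\<Sum>i<n. \<theta> i * fst w i, \<Sum>i<n. \<theta> i * snd w i) \<le> t}"
    proof (rule emeasure_mono)
    show "{w \<in> space ?P. \<phi> (\<Sum>i<n. \<theta> i * fst w i, \<Sum>i<n. \<theta> i * snd w i) \<le> t} \<in> sets ?P" by measurable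
    have ne: "{..<n} \<noteq> {}" using th2 by auto
    have jensen: "\<phi> (\<Sum>i<n. \<theta> i * u i, \<Sum>i<n. \<theta> i * v i) \<le> (\<Sum>i<n. \<theta> i * \<phi> (u i, v i))" for u v :: "nat \<Rightarrow> real"
    proof -
      have "(\<Sum>i<n. \<theta> i *\<^sub>R (u i, v i)) = (\<Sum>i<n. \<theta> i * u i, \<Sum>i<n. \<theta> i * v i)"
        by (simp add: prod_eq_iff fst_sum snd_sum)
      moreover have "\<phi> (\<Sum>i<n. \<theta> i *\<^sub>R (u i, v i)) \<le> (\<Sum>i<n. \<theta> i * \<phi> (u i, v i))"
        by (rule convex_on_sum[OF _ ne conv th2]) (use th1 in auto)
      ultimately show ?thesis by simp
    qed
    show "{w \<in> space ?P. (\<Sum>i<n. \<theta> i * \<phi> (fst w i, snd w i)) \<le> t} \<subseteq> {w \<in> space ?P. \<phi> (\<Sum>i<n. \<theta> i * fst w i, \<Sum>i<n. \<theta> i * snd w i) \<le> t}"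
      using jensen order_trans by blast
  qed
  also have "\<dots> = (\<integral>\<^sup>+v. emeasure (PiM {..<n} (\<lambda>_. FX)) {u \<in> space (PiM {..<n} (\<lambda>_. FX)). (\<Sum>i<n. \<theta> i * u i) \<in> {a. \<phi> (a, \<Sum>i<n. \<theta> i * v i) \<le> t}} \<partial>PiM {..<n} (\<lambda>_. FY))" (is "_ = ?rhs")
    proof (subst PXY.emeasure_pair_measure_alt2)
    show "{w \<in> space ?P. \<phi> (\<Sum>i<n. \<theta> i * fst w i, \<Sum>i<n. \<theta> i * snd w i) \<le> t} \<in> sets ?P" by measurable
    show "(\<integral>\<^sup>+v. emeasure (PiM {..<n} (\<lambda>_. FX)) ((\<lambda>x. (x, v)) -` {w \<in> space ?P. \<phi> (\<Sum>i<n. \<theta> i * fst w i, \<Sum>i<n. \<theta> i * snd w i) \<le> t}) \<partial>PiM {..<n} (\<lambda>_. FY)) = ?rhs"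
      by (rule nn_integral_cong) (auto intro!: arg_cong[where f="emeasure _"] simp: space_pair_measure)
  qed
  also have "\<dots> \<le> (\<integral>\<^sup>+v. emeasure FX {a. \<phi> (a, \<Sum>i<n. \<theta> i * v i) \<le> t} \<partial>PiM {..<n} (\<lambda>_. FY))"
    proof (rule nn_integral_mono)
    fix v
    let ?b = "\<Sum>i<n. \<theta> i * v i"
    have c: "continuous_on UNIV (\<lambda>a. \<phi> (a, ?b))"
      by (rule continuous_on_compose2[OF cont]) (auto intro!: continuous_intros)
    show "emeasure (PiM {..<n} (\<lambda>_. FX)) {u \<in> space (PiM {..<n} (\<lambda>_. FX)). (\<Sum>i<n. \<theta> i * u i) \<in> {a. \<phi> (a, ?b) \<le> t}} \<le> emeasure FX {a. \<phi> (a, ?b) \<le> t}"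
    proof (rule down_lemma[OF DX pX sX th1 th2])
      show "closed {a. \<phi> (a, ?b) \<le> t}" by (rule closed_Collect_le[OF c continuous_on_const])
      show "y \<in> {a. \<phi> (a, ?b) \<le> t}" if "x \<in> {a. \<phi> (a, ?b) \<le> t}" "y \<le> x" for x y
        using that mono[of y x ?b ?b] by auto
    qed
  qed
  also have "\<dots> = emeasure (FX \<Otimes>\<^sub>M PiM {..<n} (\<lambda>_. FY)) {p \<in> space (FX \<Otimes>\<^sub>M PiM {..<n} (\<lambda>_. FY)). \<phi> (fst p, \<Sum>i<n. \<theta> i * snd p i) \<le> t}" (is "?lhs = _")
    proof (subst XPY.emeasure_pair_measure_alt2)
    show "{p \<in> space (FX \<Otimes>\<^sub>M PiM {..<n} (\<lambda>_. FY)). \<phi> (fst p, \<Sum>i<n. \<theta> i * snd p i) \<le> t} \<in> sets (FX \<Otimes>\<^sub>M PiM {..<n} (\<lambda>_. FY))" by measurable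
    show "?lhs = (\<integral>\<^sup>+v. emeasure FX ((\<lambda>x. (x, v)) -` {p \<in> space (FX \<Otimes>\<^sub>M PiM {..<n} (\<lambda>_. FY)). \<phi> (fst p, \<Sum>i<n. \<theta> i * snd p i) \<le> t}) \<partial>PiM {..<n} (\<lambda>_. FY))"
      by (rule nn_integral_cong) (auto intro!: arg_cong[where f="emeasure _"] simp: space_pair_measure spX)
  qed
  also have "\<dots> = (\<integral>\<^sup>+a. emeasure (PiM {..<n} (\<lambda>_. FY)) {v \<in> space (PiM {..<n} (\<lambda>_. FY)). (\<Sum>i<n. \<theta> i * v i) \<in> {b. \<phi> (a, b) \<le> t}} \<partial>FX)" (is "_ = ?rhs")
    proof (subst sigma_finite_measure.emeasure_pair_measure_alt[OF sfPY])
    show "{p \<in> space (FX \<Otimes>\<^sub>M PiM {..<n} (\<lambda>_. FY)). \<phi> (fst p, \<Sum>i<n. \<theta> i * snd p i) \<le> t} \<in> sets (FX \<Otimes>\<^sub>M PiM {..<n} (\<lambda>_. FY))" by measurable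
    show "(\<integral>\<^sup>+a. emeasure (PiM {..<n} (\<lambda>_. FY)) (Pair a -` {p \<in> space (FX \<Otimes>\<^sub>M PiM {..<n} (\<lambda>_. FY)). \<phi> (fst p, \<Sum>i<n. \<theta> i * snd p i) \<le> t}) \<partial>FX) = ?rhs"
      by (rule nn_integral_cong) (auto intro!: arg_cong[where f="emeasure _"] simp: space_pair_measure spX)
  qed
  also have "\<dots> \<le> (\<integral>\<^sup>+a. emeasure FY {b. \<phi> (a, b) \<le> t} \<partial>FX)"
    proof (rule nn_integral_mono)
    fix a
    have c: "continuous_on UNIV (\<lambda>b. \<phi> (a, b))"
      by (rule continuous_on_compose2[OF cont]) (auto intro!: continuous_intros)
    show "emeasure (PiM {..<n} (\<lambda>_. FY)) {v \<in> space (PiM {..<n} (\<lambda>_. FY)). (\<Sum>i<n. \<theta> i * v i) \<in> {b. \<phi> (a, b) \<le> t}} \<le> emeasure FY {b. \<phi> (a, b) \<le> t}"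
    proof (rule down_lemma[OF DY pY sY th1 th2])
      show "closed {b. \<phi> (a, b) \<le> t}" by (rule closed_Collect_le[OF c continuous_on_const])
      show "y \<in> {b. \<phi> (a, b) \<le> t}" if "x \<in> {b. \<phi> (a, b) \<le> t}" "y \<le> x" for x y
        using that mono[of a a y x] by auto
    qed
  qed
  also have "\<dots> = emeasure (FX \<Otimes>\<^sub>M FY) {p \<in> space (FX \<Otimes>\<^sub>M FY). \<phi> p \<le> t}" (is "?lhs = _")
    proof (subst Y.emeasure_pair_measure_alt)
    show "{p \<in> space (FX \<Otimes>\<^sub>M FY). \<phi> p \<le> t} \<in> sets (FX \<Otimes>\<^sub>M FY)" by measurable
    show "?lhs = (\<integral>\<^sup>+a. emeasure FY (Pair a -` {p \<in> space (FX \<Otimes>\<^sub>M FY). \<phi> p \<le> t}) \<partial>FX)"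
      by (rule nn_integral_cong) (auto intro!: arg_cong[where f="emeasure _"] simp: space_pair_measure spX spY)
  qed
  also have "\<dots> = emeasure FZ {..t}"
    unfolding FZ_def
    by (subst emeasure_distr) (auto intro!: arg_cong[where f="emeasure _"] simp: space_pair_measure spX spY)
  finally have "emeasure (PiM {..<n} (\<lambda>_. FZ)) ?S \<le> emeasure FZ {..t}" .
  then show "measure (PiM {..<n} (\<lambda>_. FZ)) ?S \<le> measure FZ {..t}"
    unfolding FZ_def[symmetric] by (simp add: PZ.emeasure_eq_measure Z.emeasure_eq_measure)
qed


theorem theorem1:
  fixes M :: "'a measure" and X Y :: "'a \<Rightarrow> real" and \<phi> :: "real \<times> real \<Rightarrow> real"
  assumes "prob_space M"
    and "X \<in> borel_measurable M" and "Y \<in> borel_measurable M"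
    and "prob_space.indep_var M borel X borel Y"
    and "Dminus (distr M borel X)" and "Dminus (distr M borel Y)"
    and "\<And>a b c d. a \<le> c \<Longrightarrow> b \<le> d \<Longrightarrow> \<phi> (a, b) \<le> \<phi> (c, d)"
    and "convex_on UNIV \<phi>"
  shows "Dminus (distr M borel (\<lambda>\<omega>. \<phi> (X \<omega>, Y \<omega>)))"
proof -
  interpret M: prob_space M by fact
  have cont: "continuous_on UNIV \<phi>" by (rule convex_on_continuous[OF open_UNIV assms(8)])
  have phim0: "\<phi> \<in> borel_measurable borel" by (rule borel_measurable_continuous_onI[OF cont])
  have phim[measurable]: "\<phi> \<in> borel_measurable (borel \<Otimes>\<^sub>M borel)" using phim0 by (simp add: borel_prod)
  note [measurable] = assms(2,3)
  have XY: "distr M borel X \<Otimes>\<^sub>M distr M borel Y = distr M (borel \<Otimes>\<^sub>M borel) (\<lambda>x. (X x, Y x))"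
    using assms(4) M.indep_var_distribution_eq by blast
  have "distr M borel (\<lambda>\<omega>. \<phi> (X \<omega>, Y \<omega>)) = distr (distr M (borel \<Otimes>\<^sub>M borel) (\<lambda>x. (X x, Y x))) borel \<phi>"
    by (subst distr_distr) (auto simp: comp_def)
  also have "\<dots> = distr (distr M borel X \<Otimes>\<^sub>M distr M borel Y) borel \<phi>" using XY by simp
  finally have eq: "distr M borel (\<lambda>\<omega>. \<phi> (X \<omega>, Y \<omega>)) = distr (distr M borel X \<Otimes>\<^sub>M distr M borel Y) borel \<phi>" .
  show ?thesis unfolding eq
    by (rule main_abs) (auto intro: M.prob_space_distr assms)
qed

end
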